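(* Let $p,q,r$ be positive integers. Then each of the following hypergraphs admits a decomposition into tight $9$-cycles: (i) $K^{(3)}_{3p,3q,3r}$ for all $p,q,r\ge 1$; (ii) $K^{(3)}(3p\,|\,3q)$ for all $p\ge 2$ and $q\ge 1$; (iii) $C^{(3)}(3p,3q)$ for all $p,q\ge 2$.
   Context: For disjoint sets $A,B,C$ of sizes $a,b,c$, $K^{(3)}_{a,b,c}$ denotes the complete $3$-partite $3$-uniform hypergraph on $A\cup B\cup C$: a triple $T$ is an edge iff $|T\cap A|=|T\cap B|=|T\cap C|=1$. For disjoint sets $A,B$ with $|A|=a$, $|B|=b$, $K^{(3)}(a\,|\,b)$ denotes the $3$-uniform hypergraph on $A\cup B$ whose edges are exactly the triples $T$ with $|T\cap A|=2$ and $|T\cap B|=1$; and $C^{(3)}(a,b)$ (crossing triplets) denotes the $3$-uniform hypergraph on $A\cup B$ whose edges are exactly the triples meeting both $A$ and $B$. A (3-uniform tight) $k$-cycle is given by a cyclic sequence $v_1,\dots,v_k$ of $k$ distinct vertices, its edges being the triples $\{v_i,v_{i+1},v_{i+2}\}$ ($i=1,\dots,k$, indices mod $k$). A decomposition is a collection of cycles whose edge sets partition the edge set. *)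

theory Defs
  imports Main
begin

text \<open>A 3-uniform hypergraph is represented by its edge set, a set of 3-element vertex sets.\<close>

definition K3_partite :: "'a set \<Rightarrow> 'a set \<Rightarrow> 'a set \<Rightarrow> 'a set set" where
  "K3_partite A B C = {T. T \<subseteq> A \<union> B \<union> C \<and> card T = 3 \<and>
      card (T \<inter> A) = 1 \<and> card (T \<inter> B) = 1 \<and> card (T \<inter> C) = 1}"

definition K3_split :: "'a set \<Rightarrow> 'a set \<Rightarrow> 'a set set" where
  "K3_split A B = {T. T \<subseteq> A \<union> B \<and> card T = 3 \<and> card (T \<inter> A) = 2 \<and> card (T \<inter> B) = 1}"

definition C3_crossing :: "'a set \<Rightarrow> 'a set \<Rightarrow> 'a set set" where
  "C3_crossing A B = {T. T \<subseteq> A \<union> B \<and> card T = 3 \<and> T \<inter> A \<noteq> {} \<and> T \<inter> B \<noteq> {}}"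

definition tight_cycle :: "nat \<Rightarrow> 'a list \<Rightarrow> bool" where
  "tight_cycle k vs \<longleftrightarrow> length vs = k \<and> distinct vs"

definition cycle_edges :: "'a list \<Rightarrow> 'a set set" where
  "cycle_edges vs = {{vs ! i, vs ! ((i + 1) mod length vs), vs ! ((i + 2) mod length vs)} | i. i < length vs}"

definition has_tight_cycle_decomposition :: "nat \<Rightarrow> 'a set set \<Rightarrow> bool" where
  "has_tight_cycle_decomposition k E \<longleftrightarrow>
     (\<exists>\<C> :: 'a list set.
        (\<forall>c\<in>\<C>. tight_cycle k c) \<and>
        (\<forall>c\<in>\<C>. \<forall>d\<in>\<C>. c \<noteq> d \<longrightarrow> cycle_edges c \<inter> cycle_edges d = {}) \<and>
        (\<Union>c\<in>\<C>. cycle_edges c) = E)"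

end

theory Submission
  imports Defs
begin


definition edge_list :: "'a list \<Rightarrow> 'a set list" where
  "edge_list vs = map (\<lambda>i. {vs ! i, vs ! ((i + 1) mod length vs), vs ! ((i + 2) mod length vs)}) [0..<length vs]"

lemma set_edge_list: "set (edge_list vs) = cycle_edges vs"
  unfolding edge_list_def cycle_edges_def Setcompr_eq_image by auto

lemma decomp_list:
  assumes "list_all (tight_cycle k) cs" "distinct (map edge_list cs)"
    "distinct (concat (map edge_list cs))" "set (concat (map edge_list cs)) = E"
  shows "has_tight_cycle_decomposition k E"
  unfolding has_tight_cycle_decomposition_def
proof (intro exI[of _ "set cs"] conjI ballI impI)
  fix c assume "c \<in> set cs" thus "tight_cycle k c" using assms(1) by (simp add: list_all_iff)
next
  fix c d assume cd: "c \<in> set cs" "d \<in> set cs" "c \<noteq> d"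
  have "inj_on edge_list (set cs)" using assms(2) by (simp add: distinct_map)
  hence "edge_list c \<noteq> edge_list d" using cd by (meson inj_on_contraD)
  hence "set (edge_list c) \<inter> set (edge_list d) = {}"
    using assms(3) cd unfolding distinct_concat_iff by auto
  thus "cycle_edges c \<inter> cycle_edges d = {}" by (simp add: set_edge_list)
next
  show "(\<Union>c\<in>set cs. cycle_edges c) = E" using assms(4) by (simp add: set_edge_list)
qed

lemma decomp_Un:
  assumes "has_tight_cycle_decomposition k E1" "has_tight_cycle_decomposition k E2" "E1 \<inter> E2 = {}"
  shows "has_tight_cycle_decomposition k (E1 \<union> E2)"
proof -
  obtain C1 where C1: "\<forall>c\<in>C1. tight_cycle k c" "\<forall>c\<in>C1. \<forall>d\<in>C1. c \<noteq> d \<longrightarrow> cycle_edges c \<inter> cycle_edges d = {}"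
    "(\<Union>c\<in>C1. cycle_edges c) = E1" using assms(1) unfolding has_tight_cycle_decomposition_def by blast
  obtain C2 where C2: "\<forall>c\<in>C2. tight_cycle k c" "\<forall>c\<in>C2. \<forall>d\<in>C2. c \<noteq> d \<longrightarrow> cycle_edges c \<inter> cycle_edges d = {}"
    "(\<Union>c\<in>C2. cycle_edges c) = E2" using assms(2) unfolding has_tight_cycle_decomposition_def by blast
  show ?thesis unfolding has_tight_cycle_decomposition_def
  proof (intro exI[of _ "C1 \<union> C2"] conjI ballI impI)
    fix c d assume cd: "c \<in> C1 \<union> C2" "d \<in> C1 \<union> C2" "c \<noteq> d"
    have s1: "cycle_edges c \<subseteq> E1" if "c \<in> C1" for c using C1(3) that by blast
    have s2: "cycle_edges c \<subseteq> E2" if "c \<in> C2" for c using C2(3) that by blast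
    show "cycle_edges c \<inter> cycle_edges d = {}"
      using cd C1(2) C2(2) s1[of c] s1[of d] s2[of c] s2[of d] assms(3) by blast
  qed (use C1 C2 in auto)
qed

lemma cycle_edges_image:
  "cycle_edges c = (\<lambda>i. {c ! i, c ! ((i + 1) mod length c), c ! ((i + 2) mod length c)}) ` {..<length c}"
  unfolding cycle_edges_def by auto

lemma cycle_edges_map:
  "cycle_edges (map f c) = (`) f ` cycle_edges c"
  unfolding cycle_edges_image image_image length_map
proof (rule image_cong[OF refl])
  fix i assume "i \<in> {..<length c}"
  hence "0 < length c" by auto
  thus "{map f c ! i, map f c ! ((i + 1) mod length c), map f c ! ((i + 2) mod length c)} =
    f ` {c ! i, c ! ((i + 1) mod length c), c ! ((i + 2) mod length c)}"
    using \<open>i \<in> {..<length c}\<close> by simp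
qed

lemma set_sub_cycle: "set c \<subseteq> \<Union>(cycle_edges c)"
proof
  fix x assume "x \<in> set c"
  then obtain i where "i < length c" "x = c ! i" by (auto simp: in_set_conv_nth)
  thus "x \<in> \<Union>(cycle_edges c)" unfolding cycle_edges_def by blast
qed

lemma decomp_map:
  assumes "has_tight_cycle_decomposition k E" "inj_on f (\<Union>E)"
  shows "has_tight_cycle_decomposition k ((`) f ` E)"
proof -
  obtain C where C: "\<forall>c\<in>C. tight_cycle k c" "\<forall>c\<in>C. \<forall>d\<in>C. c \<noteq> d \<longrightarrow> cycle_edges c \<inter> cycle_edges d = {}"
    "(\<Union>c\<in>C. cycle_edges c) = E" using assms(1) unfolding has_tight_cycle_decomposition_def by blast
  have sub: "\<Union>(cycle_edges c) \<subseteq> \<Union>E" if "c \<in> C" for c using C(3) that by blast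
  show ?thesis unfolding has_tight_cycle_decomposition_def
  proof (intro exI[of _ "map f ` C"] conjI ballI impI)
    fix c' assume "c' \<in> map f ` C"
    then obtain c where c: "c \<in> C" "c' = map f c" by blast
    have "inj_on f (set c)" by (rule inj_on_subset[OF assms(2) order_trans[OF set_sub_cycle[of c] sub[OF c(1)]]])
    thus "tight_cycle k c'" using C(1) c by (auto simp: tight_cycle_def distinct_map)
  next
    fix c' d' assume cd: "c' \<in> map f ` C" "d' \<in> map f ` C" "c' \<noteq> d'"
    then obtain c d where c: "c \<in> C" "c' = map f c" and d: "d \<in> C" "d' = map f d" by blast
    with cd have "c \<noteq> d" by auto
    hence dis: "cycle_edges c \<inter> cycle_edges d = {}" using C(2) c d by blast
    show "cycle_edges c' \<inter> cycle_edges d' = {}"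
    proof (rule ccontr)
      assume "cycle_edges c' \<inter> cycle_edges d' \<noteq> {}"
      then obtain S1 S2 where S: "S1 \<in> cycle_edges c" "S2 \<in> cycle_edges d" "f ` S1 = f ` S2"
        using c d by (auto simp: cycle_edges_map)
      have "S1 \<subseteq> \<Union>E" "S2 \<subseteq> \<Union>E" using S sub c d by blast+
      hence "S1 = S2" using S(3) assms(2) by (simp add: inj_on_image_eq_iff)
      thus False using S dis by blast
    qed
  next
    show "(\<Union>c\<in>map f ` C. cycle_edges c) = (`) f ` E"
      using C(3) by (auto simp: cycle_edges_map)
  qed
qed

lemma K3_partite_char:
  assumes "A \<inter> B = {}" "A \<inter> C = {}" "B \<inter> C = {}"
  shows "K3_partite A B C = {{a,b,c}|a b c. a \<in> A \<and> b \<in> B \<and> c \<in> C}"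
proof (intro set_eqI iffI)
  fix T assume "T \<in> K3_partite A B C"
  hence T: "T \<subseteq> A \<union> B \<union> C" "card (T \<inter> A) = Suc 0" "card (T \<inter> B) = Suc 0" "card (T \<inter> C) = Suc 0"
    by (auto simp: K3_partite_def)
  obtain a where a: "T \<inter> A = {a}" using card_1_singleton_iff[THEN iffD1, OF T(2)] by blast
  obtain b where b: "T \<inter> B = {b}" using card_1_singleton_iff[THEN iffD1, OF T(3)] by blast
  obtain c where c: "T \<inter> C = {c}" using card_1_singleton_iff[THEN iffD1, OF T(4)] by blast
  have "T = {a,b,c}" using T(1) a b c by blast
  thus "T \<in> {{a,b,c}|a b c. a \<in> A \<and> b \<in> B \<and> c \<in> C}" using a b c by blast
next
  fix T assume "T \<in> {{a,b,c}|a b c. a \<in> A \<and> b \<in> B \<and> c \<in> C}"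
  then obtain a b c where T: "T = {a,b,c}" "a \<in> A" "b \<in> B" "c \<in> C" by blast
  have d: "a \<noteq> b" "a \<noteq> c" "b \<noteq> c" using assms T by blast+
  have i: "T \<inter> A = {a}" "T \<inter> B = {b}" "T \<inter> C = {c}" using assms T by blast+
  have ct: "card T = 3" using T(1) d by simp
  have sub: "T \<subseteq> A \<union> B \<union> C" using T by blast
  show "T \<in> K3_partite A B C" unfolding K3_partite_def mem_Collect_eq using i ct sub by simp
qed

lemma K3_split_char:
  assumes "A \<inter> B = {}"
  shows "K3_split A B = {{x,y,b}|x y b. x \<in> A \<and> y \<in> A \<and> x \<noteq> y \<and> b \<in> B}"
proof (intro set_eqI iffI)
  fix T assume "T \<in> K3_split A B"
  hence T: "T \<subseteq> A \<union> B" "card (T \<inter> A) = 2" "card (T \<inter> B) = Suc 0"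
    by (auto simp: K3_split_def)
  obtain x y where xy: "T \<inter> A = {x,y}" "x \<noteq> y" using card_2_iff[THEN iffD1, OF T(2)] by blast
  obtain b where b: "T \<inter> B = {b}" using card_1_singleton_iff[THEN iffD1, OF T(3)] by blast
  have "T = {x,y,b}" using T(1) xy b by blast
  thus "T \<in> {{x,y,b}|x y b. x \<in> A \<and> y \<in> A \<and> x \<noteq> y \<and> b \<in> B}" using xy b by blast
next
  fix T assume "T \<in> {{x,y,b}|x y b. x \<in> A \<and> y \<in> A \<and> x \<noteq> y \<and> b \<in> B}"
  then obtain x y b where T: "T = {x,y,b}" "x \<in> A" "y \<in> A" "x \<noteq> y" "b \<in> B" by blast
  have d: "x \<noteq> b" "y \<noteq> b" using assms T by blast+
  have i: "T \<inter> A = {x,y}" "T \<inter> B = {b}" using assms T by blast+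
  have ct: "card T = 3" using T(1,4) d by simp
  have sub: "T \<subseteq> A \<union> B" using T by blast
  show "T \<in> K3_split A B" unfolding K3_split_def mem_Collect_eq using i ct sub T(4) by simp
qed

lemma K3_partite_comp:
  assumes "A \<inter> B = {}" "A \<inter> C = {}" "B \<inter> C = {}"
  shows "K3_partite A B C = (\<lambda>(a,b,c). {a,b,c}) ` (A \<times> B \<times> C)"
  unfolding K3_partite_char[OF assms] by auto

lemma K3_split_comp:
  assumes "A \<inter> B = {}"
  shows "K3_split A B = (\<lambda>((x,y),b). {x,y,b}) ` (Set.filter (\<lambda>(x,y). x \<noteq> y) (A \<times> A) \<times> B)"
  unfolding K3_split_char[OF assms] by force

lemma K3_partite_image:
  assumes "inj_on f (A \<union> B \<union> C)" "A \<inter> B = {}" "A \<inter> C = {}" "B \<inter> C = {}"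
  shows "K3_partite (f ` A) (f ` B) (f ` C) = (`) f ` K3_partite A B C"
proof -
  have "f ` A \<inter> f ` B = {}" "f ` A \<inter> f ` C = {}" "f ` B \<inter> f ` C = {}"
    using assms(2-4) inj_on_image_Int[OF assms(1)] by (metis Un_upper1 Un_upper2 image_empty le_supI1)+
  hence e: "K3_partite (f ` A) (f ` B) (f ` C) = {{a,b,c}|a b c. a \<in> f ` A \<and> b \<in> f ` B \<and> c \<in> f ` C}"
    by (rule K3_partite_char)
  show ?thesis unfolding e K3_partite_char[OF assms(2-4)]
  proof (intro equalityI subsetI)
    fix T assume "T \<in> {{a,b,c}|a b c. a \<in> f ` A \<and> b \<in> f ` B \<and> c \<in> f ` C}"
    then obtain a b c where T: "T = {f a, f b, f c}" "a \<in> A" "b \<in> B" "c \<in> C" by blast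
    show "T \<in> (`) f ` {{a,b,c}|a b c. a \<in> A \<and> b \<in> B \<and> c \<in> C}"
      by (rule image_eqI[of _ _ "{a,b,c}"]) (use T in auto)
  next
    fix T assume "T \<in> (`) f ` {{a,b,c}|a b c. a \<in> A \<and> b \<in> B \<and> c \<in> C}"
    then obtain a b c where T: "T = f ` {a, b, c}" "a \<in> A" "b \<in> B" "c \<in> C" by blast
    show "T \<in> {{a,b,c}|a b c. a \<in> f ` A \<and> b \<in> f ` B \<and> c \<in> f ` C}"
      using T by blast
  qed
qed

lemma K3_split_image:
  assumes "inj_on f (A \<union> B)" "A \<inter> B = {}"
  shows "K3_split (f ` A) (f ` B) = (`) f ` K3_split A B"
proof -
  have "f ` A \<inter> f ` B = {}"
    using assms inj_on_image_Int[OF assms(1)] by (metis Un_upper1 Un_upper2 image_empty)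
  hence e: "K3_split (f ` A) (f ` B) = {{x,y,b}|x y b. x \<in> f ` A \<and> y \<in> f ` A \<and> x \<noteq> y \<and> b \<in> f ` B}"
    by (rule K3_split_char)
  show ?thesis unfolding e K3_split_char[OF assms(2)]
  proof (intro equalityI subsetI)
    fix T assume "T \<in> {{x,y,b}|x y b. x \<in> f ` A \<and> y \<in> f ` A \<and> x \<noteq> y \<and> b \<in> f ` B}"
    then obtain x y b where T: "T = {f x, f y, f b}" "x \<in> A" "y \<in> A" "f x \<noteq> f y" "b \<in> B" by blast
    have "x \<noteq> y" using T(4) by blast
    show "T \<in> (`) f ` {{x,y,b}|x y b. x \<in> A \<and> y \<in> A \<and> x \<noteq> y \<and> b \<in> B}"
      by (rule image_eqI[of _ _ "{x,y,b}"]) (use T \<open>x \<noteq> y\<close> in auto)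
  next
    fix T assume "T \<in> (`) f ` {{x,y,b}|x y b. x \<in> A \<and> y \<in> A \<and> x \<noteq> y \<and> b \<in> B}"
    then obtain x y b where T: "T = f ` {x, y, b}" "x \<in> A" "y \<in> A" "x \<noteq> y" "b \<in> B" by blast
    have "f x \<noteq> f y" using assms(1) T(2-4) by (meson UnI1 inj_on_contraD)
    show "T \<in> {{x,y,b}|x y b. x \<in> f ` A \<and> y \<in> f ` A \<and> x \<noteq> y \<and> b \<in> f ` B}"
      using T \<open>f x \<noteq> f y\<close> by blast
  qed
qed


lemma base333: "has_tight_cycle_decomposition 9 (K3_partite {0,1,2::nat} {3,4,5} {6,7,8})"
  apply (subst K3_partite_comp, simp, simp, simp)
  apply (rule decomp_list[where cs = "[[0, 5, 8, 1, 3, 7, 2, 4, 6], [0, 3, 6, 1, 4, 8, 2, 5, 7], [0, 4, 7, 1, 5, 6, 2, 3, 8]]"])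
  by code_simp+

lemma base63: "has_tight_cycle_decomposition 9 (K3_split {0,1,2,3,4,5::nat} {6,7,8})"
  apply (subst K3_split_comp, simp)
  apply (rule decomp_list[where cs = "[[6, 3, 5, 8, 2, 4, 7, 1, 0], [6, 4, 3, 7, 2, 1, 8, 0, 5], [6, 2, 3, 8, 1, 5, 7, 0, 4], [6, 1, 3, 7, 5, 4, 8, 0, 2], [6, 1, 4, 8, 3, 0, 7, 2, 5]]"])
  by code_simp+

lemma base93: "has_tight_cycle_decomposition 9 (K3_split {0,1,2,3,4,5,6,7,8::nat} {9,10,11})"
  apply (subst K3_split_comp, simp)
  apply (rule decomp_list[where cs = "[[9, 0, 1, 11, 2, 3, 10, 7, 5], [10, 0, 8, 9, 6, 4, 11, 7, 1], [10, 0, 5, 11, 7, 3, 9, 1, 2], [9, 2, 6, 10, 5, 4, 11, 8, 3], [11, 0, 4, 10, 6, 1, 9, 8, 7], [10, 0, 3, 11, 5, 1, 9, 7, 6], [11, 0, 2, 9, 7, 4, 10, 1, 8], [10, 1, 3, 11, 4, 2, 9, 8, 5], [11, 2, 5, 9, 4, 8, 10, 3, 6], [9, 0, 7, 10, 8, 6, 11, 1, 4], [9, 0, 6, 11, 7, 2, 10, 5, 3], [10, 2, 8, 11, 5, 6, 9, 3, 4]]"])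
  by code_simp+



lemma Union_K3_partite: "\<Union>(K3_partite A B C) \<subseteq> A \<union> B \<union> C"
  by (auto simp: K3_partite_def)

lemma Union_K3_split: "\<Union>(K3_split A B) \<subseteq> A \<union> B"
  by (auto simp: K3_split_def)

lemma nth_img1: "nth (xs @ ys) ` {..<length xs} = set xs"
proof -
  have "nth (xs @ ys) ` {..<length xs} = nth xs ` {..<length xs}"
    by (rule image_cong) (auto simp: nth_append)
  also have "\<dots> = set xs" by (auto simp: in_set_conv_nth image_iff)
  finally show ?thesis .
qed

lemma nth_img2: "nth (xs @ ys) ` {length xs..<length xs + length ys} = set ys"
proof -
  have e: "{length xs..<length xs + length ys} = (\<lambda>i. length xs + i) ` {..<length ys}"
  proof (intro equalityI subsetI)
    fix x assume "x \<in> {length xs..<length xs + length ys}"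
    hence "x = length xs + (x - length xs)" "x - length xs \<in> {..<length ys}" by auto
    thus "x \<in> (\<lambda>i. length xs + i) ` {..<length ys}" by blast
  qed auto
  have "nth (xs @ ys) ` {length xs..<length xs + length ys} = nth ys ` {..<length ys}"
    unfolding e image_image by (rule image_cong) (auto simp: nth_append)
  also have "\<dots> = set ys" by (auto simp: in_set_conv_nth image_iff)
  finally show ?thesis .
qed

lemma partite_base:
  assumes "card A = 3" "card B = 3" "card C = 3" "A \<inter> B = {}" "A \<inter> C = {}" "B \<inter> C = {}"
  shows "has_tight_cycle_decomposition 9 (K3_partite A B C)"
proof -
  obtain a0 a1 a2 where A: "A = {a0,a1,a2}" "a0 \<noteq> a1" "a1 \<noteq> a2" "a0 \<noteq> a2"
    using card_3_iff[THEN iffD1, OF assms(1)] by blast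
  obtain b0 b1 b2 where B: "B = {b0,b1,b2}" "b0 \<noteq> b1" "b1 \<noteq> b2" "b0 \<noteq> b2"
    using card_3_iff[THEN iffD1, OF assms(2)] by blast
  obtain c0 c1 c2 where C: "C = {c0,c1,c2}" "c0 \<noteq> c1" "c1 \<noteq> c2" "c0 \<noteq> c2"
    using card_3_iff[THEN iffD1, OF assms(3)] by blast
  define ws where "ws = [a0,a1,a2,b0,b1,b2,c0,c1,c2]"
  have dist: "distinct ws" using A B C assms(4-6) unfolding ws_def by auto
  have inj: "inj_on (nth ws) ({0,1,2} \<union> {3,4,5} \<union> {6,7,8})"
    by (rule inj_on_nth[OF dist]) (simp add: ws_def)
  have iA: "nth ws ` {0,1,2} = A" using A(1) by (simp add: ws_def numeral_eq_Suc)
  have iB: "nth ws ` {3,4,5} = B" using B(1) by (simp add: ws_def numeral_eq_Suc)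
  have iC: "nth ws ` {6,7,8} = C" using C(1) by (simp add: ws_def numeral_eq_Suc)
  have eq: "K3_partite A B C = (`) (nth ws) ` K3_partite {0,1,2} {3,4,5} {6,7,8}"
    using K3_partite_image[OF inj] iA iB iC by simp
  show ?thesis unfolding eq
    by (rule decomp_map[OF base333]) (rule inj_on_subset[OF inj Union_K3_partite])
qed

lemma split_base_gen:
  assumes base: "has_tight_cycle_decomposition 9 (K3_split {..<n} {n..<n+3})"
    and "finite A" "card A = n" "card B = 3" "A \<inter> B = {}"
  shows "has_tight_cycle_decomposition 9 (K3_split A B)"
proof -
  obtain xs where xs: "distinct xs" "set xs = A" using finite_distinct_list[OF assms(2)] by blast
  have lx: "length xs = n" using xs assms(3) distinct_card by metis
  have "finite B" using assms(4) by (intro card_ge_0_finite) simp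
  then obtain ys where ys: "distinct ys" "set ys = B" using finite_distinct_list by blast
  have ly: "length ys = 3" using ys assms(4) distinct_card by metis
  define ws where "ws = xs @ ys"
  have dist: "distinct ws" using xs ys assms(5) unfolding ws_def by auto
  have inj: "inj_on (nth ws) ({..<n} \<union> {n..<n+3})"
    by (rule inj_on_nth[OF dist]) (auto simp: ws_def lx ly)
  have iA: "nth ws ` {..<n} = A" using nth_img1[of xs ys] xs lx by (simp add: ws_def)
  have iB: "nth ws ` {n..<n+3} = B" using nth_img2[of xs ys] ys lx ly by (simp add: ws_def)
  have eq: "K3_split A B = (`) (nth ws) ` K3_split {..<n} {n..<n+3}"
  proof -
    have dj: "{..<n} \<inter> {n..<n+3} = {}" by auto
    show ?thesis using K3_split_image[OF inj dj] iA iB by simp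
  qed
  show ?thesis unfolding eq
    by (rule decomp_map[OF base]) (rule inj_on_subset[OF inj Union_K3_split])
qed

lemma base63': "has_tight_cycle_decomposition 9 (K3_split {..<6} {6..<6+3::nat})"
proof -
  have "{..<6::nat} = {0,1,2,3,4,5}" "{6..<6+3::nat} = {6,7,8}" by auto
  thus ?thesis using base63 by simp
qed

lemma base93': "has_tight_cycle_decomposition 9 (K3_split {..<9} {9..<9+3::nat})"
proof -
  have "{..<9::nat} = {0,1,2,3,4,5,6,7,8}" "{9..<9+3::nat} = {9,10,11}" by auto
  thus ?thesis using base93 by simp
qed

lemma grow:
  assumes base: "\<And>X. finite X \<Longrightarrow> card X = 3 \<Longrightarrow> X \<inter> D = {} \<Longrightarrow> P X"
    and step: "\<And>X Y. P X \<Longrightarrow> P Y \<Longrightarrow> X \<inter> Y = {} \<Longrightarrow> (X \<union> Y) \<inter> D = {} \<Longrightarrow> P (X \<union> Y)"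
  shows "finite X \<Longrightarrow> card X = 3 * p \<Longrightarrow> 1 \<le> p \<Longrightarrow> X \<inter> D = {} \<Longrightarrow> P X"
proof (induction p arbitrary: X)
  case 0 thus ?case by simp
next
  case (Suc p)
  show ?case
  proof (cases "p = 0")
    case True thus ?thesis using Suc.prems base by simp
  next
    case False
    obtain X1 where X1: "X1 \<subseteq> X" "card X1 = 3" "finite X1"
      using obtain_subset_with_card_n[of 3 X] Suc.prems(2) by auto
    define X2 where "X2 = X - X1"
    have c2: "card X2 = 3 * p" using card_Diff_subset[OF X1(3) X1(1)] Suc.prems(2) X1(2)
      by (simp add: X2_def)
    have "P X1" using base X1 Suc.prems(4) by blast
    moreover have "P X2" using Suc.IH[of X2] c2 False Suc.prems(1,4) by (auto simp: X2_def)
    moreover have "X1 \<inter> X2 = {}" "X = X1 \<union> X2" using X1(1) by (auto simp: X2_def)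
    ultimately show ?thesis using step Suc.prems(4) by metis
  qed
qed

lemma partite_Un1:
  assumes "X \<inter> Y = {}" "(X \<union> Y) \<inter> B = {}" "(X \<union> Y) \<inter> C = {}" "B \<inter> C = {}"
  shows "K3_partite (X \<union> Y) B C = K3_partite X B C \<union> K3_partite Y B C"
    "K3_partite X B C \<inter> K3_partite Y B C = {}"
proof -
  have d: "X \<inter> B = {}" "X \<inter> C = {}" "Y \<inter> B = {}" "Y \<inter> C = {}" using assms by auto
  show "K3_partite (X \<union> Y) B C = K3_partite X B C \<union> K3_partite Y B C"
    unfolding K3_partite_char[OF assms(2-4)] K3_partite_char[OF d(1,2) assms(4)]
      K3_partite_char[OF d(3,4) assms(4)] by blast
  have "T \<inter> Y = {}" if "T \<in> K3_partite X B C" for T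
    using that assms(1) d by (auto simp: K3_partite_def)
  thus "K3_partite X B C \<inter> K3_partite Y B C = {}" by (fastforce simp: K3_partite_def)
qed

lemma partite_sym12: "K3_partite A B C = K3_partite B A C"
  unfolding K3_partite_def by (simp add: Un_ac conj_ac)

lemma partite_sym13: "K3_partite A B C = K3_partite C B A"
  unfolding K3_partite_def by (simp add: Un_ac conj_ac)

lemma partite_grow:
  assumes base: "\<And>X. finite X \<Longrightarrow> card X = 3 \<Longrightarrow> X \<inter> B = {} \<Longrightarrow> X \<inter> C = {} \<Longrightarrow>
      has_tight_cycle_decomposition 9 (K3_partite X B C)"
    and "B \<inter> C = {}" "finite X" "card X = 3 * p" "1 \<le> p" "X \<inter> B = {}" "X \<inter> C = {}"
  shows "has_tight_cycle_decomposition 9 (K3_partite X B C)"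
proof -
  have dd: "X \<inter> (B \<union> C) = {}" using assms by auto
  show ?thesis
  proof (rule grow[where P = "\<lambda>X. has_tight_cycle_decomposition 9 (K3_partite X B C)" and D = "B \<union> C",
        OF _ _ assms(3-5) dd])
    fix X assume "finite X" "card X = 3" "X \<inter> (B \<union> C) = {}"
    thus "has_tight_cycle_decomposition 9 (K3_partite X B C)" using base by auto
  next
    fix X Y assume h: "has_tight_cycle_decomposition 9 (K3_partite X B C)"
      "has_tight_cycle_decomposition 9 (K3_partite Y B C)" "X \<inter> Y = {}" "(X \<union> Y) \<inter> (B \<union> C) = {}"
    have "(X \<union> Y) \<inter> B = {}" "(X \<union> Y) \<inter> C = {}" using h(4) by auto
    note u = partite_Un1[OF h(3) this assms(2)]
    show "has_tight_cycle_decomposition 9 (K3_partite (X \<union> Y) B C)"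
      unfolding u(1) by (rule decomp_Un[OF h(1,2) u(2)])
  qed
qed

lemma partite_main:
  assumes "1 \<le> p" "1 \<le> q" "1 \<le> r" "finite A" "finite B" "finite C"
    "card A = 3 * p" "card B = 3 * q" "card C = 3 * r" "A \<inter> B = {}" "A \<inter> C = {}" "B \<inter> C = {}"
  shows "has_tight_cycle_decomposition 9 (K3_partite A B C)"
proof -
  have s1: "has_tight_cycle_decomposition 9 (K3_partite A' B' C')"
    if "finite A'" "card A' = 3 * p" "card B' = 3" "card C' = 3" "A' \<inter> B' = {}" "A' \<inter> C' = {}" "B' \<inter> C' = {}"
    for A' B' C'
    by (rule partite_grow[of B' C' A' p]) (use that assms(1) partite_base in auto)
  have s2: "has_tight_cycle_decomposition 9 (K3_partite A' B' C')"
    if "finite A'" "card A' = 3 * p" "finite B'" "card B' = 3 * q" "card C' = 3" "A' \<inter> B' = {}" "A' \<inter> C' = {}" "B' \<inter> C' = {}"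
    for A' B' C'
  proof -
    have "has_tight_cycle_decomposition 9 (K3_partite B' A' C')"
    proof (rule partite_grow[of A' C' B' q])
      fix X assume "finite X" "card X = 3" "X \<inter> A' = {}" "X \<inter> C' = {}"
      thus "has_tight_cycle_decomposition 9 (K3_partite X A' C')"
        using s1[of A' X C'] that by (auto simp: partite_sym12[of X])
    qed (use that assms(2) in auto)
    thus ?thesis by (simp add: partite_sym12[of B'])
  qed
  have "has_tight_cycle_decomposition 9 (K3_partite C B A)"
  proof (rule partite_grow[of B A C r])
    fix X assume "finite X" "card X = 3" "X \<inter> B = {}" "X \<inter> A = {}"
    thus "has_tight_cycle_decomposition 9 (K3_partite X B A)"
      using s2[of A B X] assms by (auto simp: partite_sym13[of X])
  qed (use assms in auto)
  thus ?thesis by (simp add: partite_sym13[of C])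
qed



lemma split_Un1:
  assumes "X \<inter> Y = {}" "X \<inter> B = {}" "Y \<inter> B = {}"
  shows "K3_split (X \<union> Y) B = K3_split X B \<union> K3_split Y B \<union> K3_partite X Y B"
    "K3_split X B \<inter> K3_split Y B = {}"
    "(K3_split X B \<union> K3_split Y B) \<inter> K3_partite X Y B = {}"
proof -
  have d: "(X \<union> Y) \<inter> B = {}" using assms by auto
  show "K3_split (X \<union> Y) B = K3_split X B \<union> K3_split Y B \<union> K3_partite X Y B"
    unfolding K3_split_char[OF d] K3_split_char[OF assms(2)] K3_split_char[OF assms(3)]
      K3_partite_char[OF assms]
  proof (intro equalityI subsetI)
    fix T assume "T \<in> {{x, y, b} |x y b. x \<in> X \<union> Y \<and> y \<in> X \<union> Y \<and> x \<noteq> y \<and> b \<in> B}"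
    then obtain x y b where T: "T = {x,y,b}" "x \<in> X \<union> Y" "y \<in> X \<union> Y" "x \<noteq> y" "b \<in> B" by blast
    show "T \<in> {{x, y, b} |x y b. x \<in> X \<and> y \<in> X \<and> x \<noteq> y \<and> b \<in> B} \<union>
             {{x, y, b} |x y b. x \<in> Y \<and> y \<in> Y \<and> x \<noteq> y \<and> b \<in> B} \<union>
             {{a, b, c} |a b c. a \<in> X \<and> b \<in> Y \<and> c \<in> B}"
    proof (cases "x \<in> X")
      case True
      show ?thesis
      proof (cases "y \<in> X")
        case True with \<open>x \<in> X\<close> T show ?thesis by blast
      next
        case False with \<open>x \<in> X\<close> T show ?thesis by blast
      qed
    next
      case False
      hence xY: "x \<in> Y" using T by blast
      show ?thesis
      proof (cases "y \<in> X")
        case True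
        have "T = {y,x,b}" using T(1) by (simp add: insert_commute)
        with True xY T show ?thesis by blast
      next
        case False with xY T show ?thesis by blast
      qed
    qed
  next
    fix T assume "T \<in> {{x, y, b} |x y b. x \<in> X \<and> y \<in> X \<and> x \<noteq> y \<and> b \<in> B} \<union>
             {{x, y, b} |x y b. x \<in> Y \<and> y \<in> Y \<and> x \<noteq> y \<and> b \<in> B} \<union>
             {{a, b, c} |a b c. a \<in> X \<and> b \<in> Y \<and> c \<in> B}"
    thus "T \<in> {{x, y, b} |x y b. x \<in> X \<union> Y \<and> y \<in> X \<union> Y \<and> x \<noteq> y \<and> b \<in> B}"
      using assms(1) by blast
  qed
  have eX: "T \<inter> Y = {}" if "T \<in> K3_split X B" for T
    using that assms by (auto simp: K3_split_def)
  have eY: "T \<inter> X = {}" if "T \<in> K3_split Y B" for T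
    using that assms by (auto simp: K3_split_def)
  show "K3_split X B \<inter> K3_split Y B = {}"
  proof (rule ccontr)
    assume "K3_split X B \<inter> K3_split Y B \<noteq> {}"
    then obtain T where "T \<in> K3_split X B" "T \<in> K3_split Y B" by blast
    thus False using eX[of T] by (simp add: K3_split_def)
  qed
  show "(K3_split X B \<union> K3_split Y B) \<inter> K3_partite X Y B = {}"
  proof (rule ccontr)
    assume "(K3_split X B \<union> K3_split Y B) \<inter> K3_partite X Y B \<noteq> {}"
    then obtain T where "T \<in> K3_split X B \<or> T \<in> K3_split Y B" "T \<in> K3_partite X Y B" by blast
    thus False using eX[of T] eY[of T] by (auto simp: K3_partite_def)
  qed
qed

lemma split_Un2:
  assumes "A \<inter> B1 = {}" "A \<inter> B2 = {}" "B1 \<inter> B2 = {}"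
  shows "K3_split A (B1 \<union> B2) = K3_split A B1 \<union> K3_split A B2"
    "K3_split A B1 \<inter> K3_split A B2 = {}"
proof -
  have d: "A \<inter> (B1 \<union> B2) = {}" using assms by auto
  show "K3_split A (B1 \<union> B2) = K3_split A B1 \<union> K3_split A B2"
    unfolding K3_split_char[OF d] K3_split_char[OF assms(1)] K3_split_char[OF assms(2)] by blast
  have e: "T \<inter> B2 = {}" if "T \<in> K3_split A B1" for T
    using that assms by (auto simp: K3_split_def)
  show "K3_split A B1 \<inter> K3_split A B2 = {}"
  proof (rule ccontr)
    assume "K3_split A B1 \<inter> K3_split A B2 \<noteq> {}"
    then obtain T where "T \<in> K3_split A B1" "T \<in> K3_split A B2" by blast
    thus False using e[of T] by (simp add: K3_split_def)
  qed
qed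

lemma split_B3:
  "\<forall>A. finite A \<longrightarrow> card A = 3 * p \<longrightarrow> 2 \<le> p \<longrightarrow> card B = 3 \<longrightarrow> A \<inter> B = {} \<longrightarrow>
     has_tight_cycle_decomposition 9 (K3_split A B)"
proof (induction p rule: less_induct)
  case (less p)
  show ?case
  proof (intro allI impI)
    fix A assume A: "finite A" "card A = 3 * p" "2 \<le> p" "card B = 3" "A \<inter> B = {}"
    have fB: "finite B" using A(4) by (intro card_ge_0_finite) simp
    consider "p = 2" | "p = 3" | "4 \<le> p" using A(3) by linarith
    thus "has_tight_cycle_decomposition 9 (K3_split A B)"
    proof cases
      case 1 thus ?thesis using split_base_gen[OF base63' A(1) _ A(4,5)] A(2) by simp
    next
      case 2 thus ?thesis using split_base_gen[OF base93' A(1) _ A(4,5)] A(2) by simp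
    next
      case 3
      obtain A1 where A1: "A1 \<subseteq> A" "card A1 = 6" "finite A1"
        using obtain_subset_with_card_n[of 6 A] A(2) 3 by auto
      define A2 where "A2 = A - A1"
      have c2: "card A2 = 3 * (p - 2)" using card_Diff_subset[OF A1(3) A1(1)] A(2) A1(2)
        by (simp add: A2_def)
      have fA2: "finite A2" using A(1) by (simp add: A2_def)
      have dj: "A1 \<inter> A2 = {}" "A1 \<inter> B = {}" "A2 \<inter> B = {}" "A = A1 \<union> A2"
        using A1(1) A(5) by (auto simp: A2_def)
      have h1: "has_tight_cycle_decomposition 9 (K3_split A1 B)"
        using split_base_gen[OF base63' A1(3) _ A(4) dj(2)] A1(2) by simp
      have h2: "has_tight_cycle_decomposition 9 (K3_split A2 B)"
        using less.IH[of "p - 2"] 3 fA2 c2 A(4) dj(3) by auto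
      have h3: "has_tight_cycle_decomposition 9 (K3_partite A1 A2 B)"
        by (rule partite_main[of 2 "p - 2" 1]) (use 3 A1 fA2 c2 fB A(4) dj in auto)
      note u = split_Un1[OF dj(1-3)]
      show ?thesis unfolding dj(4) u(1)
        by (rule decomp_Un[OF decomp_Un[OF h1 h2 u(2)] h3 u(3)])
    qed
  qed
qed

lemma split_main:
  assumes "2 \<le> p" "1 \<le> q" "finite A" "finite B" "card A = 3 * p" "card B = 3 * q" "A \<inter> B = {}"
  shows "has_tight_cycle_decomposition 9 (K3_split A B)"
proof -
  have dd: "B \<inter> A = {}" using assms(7) by auto
  show ?thesis
  proof (rule grow[where P = "\<lambda>Y. has_tight_cycle_decomposition 9 (K3_split A Y)" and D = A,
        OF _ _ assms(4) assms(6) assms(2) dd])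
    fix X assume "finite X" "card X = 3" "X \<inter> A = {}"
    thus "has_tight_cycle_decomposition 9 (K3_split A X)"
      using split_B3[of p X] assms by auto
  next
    fix X Y assume h: "has_tight_cycle_decomposition 9 (K3_split A X)"
      "has_tight_cycle_decomposition 9 (K3_split A Y)" "X \<inter> Y = {}" "(X \<union> Y) \<inter> A = {}"
    have "A \<inter> X = {}" "A \<inter> Y = {}" using h(4) by auto
    note u = split_Un2[OF this h(3)]
    show "has_tight_cycle_decomposition 9 (K3_split A (X \<union> Y))"
      unfolding u(1) by (rule decomp_Un[OF h(1,2) u(2)])
  qed
qed

lemma C3_eq:
  assumes "A \<inter> B = {}"
  shows "C3_crossing A B = K3_split A B \<union> K3_split B A" "K3_split A B \<inter> K3_split B A = {}"
proof -
  show "C3_crossing A B = K3_split A B \<union> K3_split B A"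
  proof (intro equalityI subsetI)
    fix T assume "T \<in> C3_crossing A B"
    hence T: "T \<subseteq> A \<union> B" "card T = 3" "T \<inter> A \<noteq> {}" "T \<inter> B \<noteq> {}" by (auto simp: C3_crossing_def)
    have fT: "finite T" using T(2) by (intro card_ge_0_finite) simp
    have "card T = card (T \<inter> A) + card (T \<inter> B)"
    proof -
      have "T = (T \<inter> A) \<union> (T \<inter> B)" using T(1) by blast
      hence "card T = card ((T \<inter> A) \<union> (T \<inter> B))" by simp
      also have "\<dots> = card (T \<inter> A) + card (T \<inter> B)"
        by (rule card_Un_disjoint) (use fT assms in auto)
      finally show ?thesis .
    qed
    moreover have "card (T \<inter> A) \<noteq> 0" "card (T \<inter> B) \<noteq> 0" using fT T(3,4) by auto
    ultimately have "(card (T \<inter> A) = 2 \<and> card (T \<inter> B) = 1) \<or> (card (T \<inter> A) = 1 \<and> card (T \<inter> B) = 2)"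
      using T(2) by linarith
    thus "T \<in> K3_split A B \<union> K3_split B A" using T(1,2)
      by (auto simp: K3_split_def Int_commute Un_commute)
  next
    fix T assume "T \<in> K3_split A B \<union> K3_split B A"
    thus "T \<in> C3_crossing A B" by (auto simp: K3_split_def C3_crossing_def)
  qed
  show "K3_split A B \<inter> K3_split B A = {}" by (auto simp: K3_split_def)
qed

theorem lemma11:
  fixes A B C :: "'a set" and p q r :: nat
  shows
   "(p \<ge> 1 \<and> q \<ge> 1 \<and> r \<ge> 1 \<and> finite A \<and> finite B \<and> finite C \<and>
      card A = 3 * p \<and> card B = 3 * q \<and> card C = 3 * r \<and>
      A \<inter> B = {} \<and> A \<inter> C = {} \<and> B \<inter> C = {}
      \<longrightarrow> has_tight_cycle_decomposition 9 (K3_partite A B C))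
    \<and> (p \<ge> 2 \<and> q \<ge> 1 \<and> finite A \<and> finite B \<and>
      card A = 3 * p \<and> card B = 3 * q \<and> A \<inter> B = {}
      \<longrightarrow> has_tight_cycle_decomposition 9 (K3_split A B))
    \<and> (p \<ge> 2 \<and> q \<ge> 2 \<and> finite A \<and> finite B \<and>
      card A = 3 * p \<and> card B = 3 * q \<and> A \<inter> B = {}
      \<longrightarrow> has_tight_cycle_decomposition 9 (C3_crossing A B))"
proof (intro conjI impI)
  assume h: "p \<ge> 1 \<and> q \<ge> 1 \<and> r \<ge> 1 \<and> finite A \<and> finite B \<and> finite C \<and>
      card A = 3 * p \<and> card B = 3 * q \<and> card C = 3 * r \<and>
      A \<inter> B = {} \<and> A \<inter> C = {} \<and> B \<inter> C = {}"
  show "has_tight_cycle_decomposition 9 (K3_partite A B C)"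
    using partite_main[of p q r A B C] h by blast
next
  assume h: "p \<ge> 2 \<and> q \<ge> 1 \<and> finite A \<and> finite B \<and>
      card A = 3 * p \<and> card B = 3 * q \<and> A \<inter> B = {}"
  show "has_tight_cycle_decomposition 9 (K3_split A B)"
    using split_main[of p q A B] h by blast
next
  assume h: "p \<ge> 2 \<and> q \<ge> 2 \<and> finite A \<and> finite B \<and>
      card A = 3 * p \<and> card B = 3 * q \<and> A \<inter> B = {}"
  hence d: "A \<inter> B = {}" "B \<inter> A = {}" by auto
  have "has_tight_cycle_decomposition 9 (K3_split A B)"
    using split_main[of p q A B] h by auto
  moreover have "has_tight_cycle_decomposition 9 (K3_split B A)"
    using split_main[of q p B A] h d by auto
  ultimately show "has_tight_cycle_decomposition 9 (C3_crossing A B)"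
    unfolding C3_eq(1)[OF d(1)] using decomp_Un C3_eq(2)[OF d(1)] by blast
qed


end
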